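(* Let $f:\mathbb{R}^{n\times n}\to\mathbb{R}$ be differentiable with $\|\nabla f(X)-\nabla f(Y)\|_{\mathsf F}\le L\|X-Y\|_{\mathsf F}$ for all $X,Y\in\mathcal{D}_{[0,1]^n}$, and suppose there are constants $\underline{\nu}_f\le\overline{\nu}_f$ with $\frac{\underline{\nu}_f}{2}\|Y-X\|_{\mathsf F}^2\le f(Y)-f(X)-\langle\nabla f(X),Y-X\rangle\le\frac{\overline{\nu}_f}{2}\|Y-X\|_{\mathsf F}^2$ for all $X,Y\in\mathcal{D}_n$. Let $0<p<1$ and consider \[ \min_{X\in\mathcal{D}_n}\ F_{\sigma,p,\epsilon}(X):=f(X)+\sigma\sum_{i,j=1}^n (X_{ij}+\epsilon)^p . \] (a) Let $\epsilon>0$ and let $c>1$ be a constant. If \[ \sigma>\bar\sigma_{p,\epsilon}:=\frac{c}{p}\cdot\frac{L(2+\sqrt n)+\|\nabla f(\mathbf 0)\|_{\mathsf F}}{\epsilon^{p-1}-(1/2+\epsilon)^{p-1}}, \] then every permutation matrix is a local minimizer of this problem. (b) Let $\epsilon\ge0$. If $\sigma>\sigma^*_{p,\epsilon}:=\max\{\overline{\nu}_f/\overline{\nu}_h,0\}$ with $\overline{\nu}_h=p(1-p)(1+\epsilon)^{p-2}$, then every local minimizer of this problem is a permutation matrix.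
   Context: $\mathcal{D}_n=\{X\in\mathbb{R}^{n\times n}: X\mathbf{e}=X^{\mathsf T}\mathbf{e}=\mathbf{e},\ X\ge0\}$ is the set of doubly stochastic matrices ($\mathbf e$ the all-ones vector), $\mathcal{D}_{[0,1]^n}=\{X\in\mathbb{R}^{n\times n}:0\le X_{ij}\le1\}$, $\mathbf 0$ the zero matrix, $\langle M,N\rangle=\mathrm{tr}(M^{\mathsf T}N)$, $\|\cdot\|_{\mathsf F}$ the Frobenius norm. *)

theory Defs
  imports "HOL-Analysis.Analysis"
begin

text \<open>n x n real matrices are rendered as real^'n^'n; the inner product on this type
  is the trace inner product and its norm is the Frobenius norm.\<close>

definition doubly_stochastic :: "real^'n^'n \<Rightarrow> bool" where
  "doubly_stochastic X \<longleftrightarrow>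
     (\<forall>i j. X $ i $ j \<ge> 0) \<and> (\<forall>i. (\<Sum>j\<in>UNIV. X $ i $ j) = 1) \<and> (\<forall>j. (\<Sum>i\<in>UNIV. X $ i $ j) = 1)"

definition unit_box_matrix :: "real^'n^'n \<Rightarrow> bool" where
  "unit_box_matrix X \<longleftrightarrow> (\<forall>i j. 0 \<le> X $ i $ j \<and> X $ i $ j \<le> 1)"

definition permutation_matrix :: "real^'n^'n \<Rightarrow> bool" where
  "permutation_matrix X \<longleftrightarrow>
     (\<exists>\<pi>. \<pi> permutes (UNIV :: 'n set) \<and> (\<forall>i j. X $ i $ j = (if j = \<pi> i then 1 else 0)))"

definition local_minimizer_on :: "('a::metric_space \<Rightarrow> real) \<Rightarrow> 'a set \<Rightarrow> 'a \<Rightarrow> bool" where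
  "local_minimizer_on F S X \<longleftrightarrow>
     X \<in> S \<and> (\<exists>\<delta>>0. \<forall>Y\<in>S. dist Y X < \<delta> \<longrightarrow> F X \<le> F Y)"

definition F_obj :: "(real^'n^'n \<Rightarrow> real) \<Rightarrow> real \<Rightarrow> real \<Rightarrow> real \<Rightarrow> real^'n^'n \<Rightarrow> real" where
  "F_obj f \<sigma> p \<epsilon> X = f X + \<sigma> * (\<Sum>i\<in>UNIV. \<Sum>j\<in>UNIV. (X $ i $ j + \<epsilon>) powr p)"

end

theory Submission
  imports Defs
begin


lemma powr_mvt_bounds:
  fixes a b p :: real
  assumes "0 < a" "a < b" "0 < p" "p < 1"
  shows "p * (b - a) * b powr (p - 1) \<le> b powr p - a powr p"
    and "b powr p - a powr p \<le> p * (b - a) * a powr (p - 1)"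
proof -
  have "\<And>x. a \<le> x \<Longrightarrow> x \<le> b \<Longrightarrow> DERIV (\<lambda>x. x powr p) x :> p * x powr (p - 1)"
    using assms by (intro has_real_derivative_powr) auto
  then obtain z where z: "a < z" "z < b" "b powr p - a powr p = (b - a) * (p * z powr (p - 1))"
    using MVT2[OF assms(2), of "\<lambda>x. x powr p" "\<lambda>x. p * x powr (p - 1)"] by blast
  have "b powr (p - 1) \<le> z powr (p - 1)" using z assms by (intro powr_mono2') auto
  moreover have "z powr (p - 1) \<le> a powr (p - 1)" using z assms by (intro powr_mono2') auto
  ultimately have "(b - a) * (p * b powr (p - 1)) \<le> (b - a) * (p * z powr (p - 1))"
     and "(b - a) * (p * z powr (p - 1)) \<le> (b - a) * (p * a powr (p - 1))"
    using z assms by (auto intro!: mult_left_mono)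
  then show "p * (b - a) * b powr (p - 1) \<le> b powr p - a powr p"
    and "b powr p - a powr p \<le> p * (b - a) * a powr (p - 1)"
    using z(3) by (auto simp: algebra_simps)
qed

lemma off_bound:
  fixes y d e p :: real
  assumes "0 \<le> y" "y \<le> d" "0 < e" "0 < p" "p < 1"
  shows "p * y * (d + e) powr (p - 1) \<le> (y + e) powr p - e powr p"
proof (cases "y = 0")
  case True then show ?thesis by simp
next
  case False
  then have "p * ((y + e) - e) * (y + e) powr (p - 1) \<le> (y + e) powr p - e powr p"
    using assms by (intro powr_mvt_bounds(1)) auto
  moreover have "(d + e) powr (p - 1) \<le> (y + e) powr (p - 1)"
    using assms by (intro powr_mono2') auto
  ultimately show ?thesis using assms
    by (smt (verit) mult_left_mono mult_nonneg_nonneg)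
qed

lemma on_bound:
  fixes y e p :: real
  assumes "1/2 \<le> y" "y \<le> 1" "0 < e" "0 < p" "p < 1"
  shows "- (p * (1 - y) * (1/2 + e) powr (p - 1)) \<le> (y + e) powr p - (1 + e) powr p"
proof (cases "y = 1")
  case True then show ?thesis by simp
next
  case False
  then have "(1 + e) powr p - (y + e) powr p \<le> p * ((1 + e) - (y + e)) * (y + e) powr (p - 1)"
    using assms by (intro powr_mvt_bounds(2)) auto
  moreover have "(y + e) powr (p - 1) \<le> (1/2 + e) powr (p - 1)"
    using assms by (intro powr_mono2') auto
  ultimately show ?thesis using assms
    by (smt (verit) mult_left_mono mult_nonneg_nonneg)
qed

lemma concave_bound:
  fixes x u e p :: real
  assumes "0 < x - \<bar>u\<bar>" "x + \<bar>u\<bar> \<le> 1" "0 \<le> e" "0 < p" "p < 1"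
  shows "(x + u + e) powr p + (x - u + e) powr p - 2 * (x + e) powr p
           \<le> - (p * (1 - p) * (1 + e) powr (p - 2)) * u\<^sup>2"
proof -
  define nu where "nu = p * (1 - p) * (1 + e) powr (p - 2)"
  define k where "k = (\<lambda>y. (y + e) powr p + nu / 2 * y\<^sup>2)"
  define k' where "k' = (\<lambda>y. p * (y + e) powr (p - 1) + nu * y)"
  define k'' where "k'' = (\<lambda>y. p * (p - 1) * (y + e) powr (p - 2) + nu)"
  have dk: "DERIV k y :> k' y" if "0 < y" for y
    unfolding k_def k'_def using that assms
    by (auto intro!: derivative_eq_intros simp: power2_eq_square)
  have dk': "DERIV k' y :> k'' y" if "0 < y" for y
    unfolding k'_def k''_def using that assms
    by (auto intro!: derivative_eq_intros simp: algebra_simps)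
  have k''neg: "k'' y \<le> 0" if "0 < y" "y \<le> 1" for y
  proof -
    have "(1 + e) powr (p - 2) \<le> (y + e) powr (p - 2)"
      using that assms by (intro powr_mono2') auto
    then have "p * (1 - p) * (1 + e) powr (p - 2) \<le> p * (1 - p) * (y + e) powr (p - 2)"
      using assms by (intro mult_left_mono) auto
    then show ?thesis unfolding k''_def nu_def by (simp add: algebra_simps)
  qed
  have k'anti: "k' b \<le> k' a" if ab: "0 < a" "a < b" "b \<le> 1" for a b
  proof -
    obtain z where z: "a < z" "z < b" "k' b - k' a = (b - a) * k'' z"
      using MVT2[OF ab(2), of k' k''] dk' ab by force
    have "k'' z \<le> 0" using z ab k''neg by auto
    then show ?thesis using z ab by (smt (verit) mult_nonneg_nonpos)
  qed
  have key: "k (x + v) + k (x - v) \<le> 2 * k x" if vv: "0 \<le> v" "0 < x - v" "x + v \<le> 1" for v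
  proof (cases "v = 0")
    case True then show ?thesis by simp
  next
    case False
    with vv have v: "0 < v" by auto
    obtain z1 where z1: "x < z1" "z1 < x + v" "k (x + v) - k x = (x + v - x) * k' z1"
      using MVT2[of x "x + v" k k'] dk v vv by force
    obtain z2 where z2: "x - v < z2" "z2 < x" "k x - k (x - v) = (x - (x - v)) * k' z2"
      using MVT2[of "x - v" x k k'] dk v vv by force
    have "k' z1 \<le> k' z2" using k'anti[of z2 z1] z1 z2 vv by auto
    then have "v * k' z1 \<le> v * k' z2" using v by (intro mult_left_mono) auto
    then show ?thesis using z1(3) z2(3) by (simp add: algebra_simps)
  qed
  have "k (x + \<bar>u\<bar>) + k (x - \<bar>u\<bar>) \<le> 2 * k x" using key assms by auto
  then have "k (x + u) + k (x - u) \<le> 2 * k x" by (cases "u \<ge> 0") (auto simp: add.commute)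
  then show ?thesis unfolding k_def nu_def[symmetric]
    by (simp add: power2_eq_square algebra_simps)
qed



lemma inner_mat: "(X::real^'n^'n) \<bullet> Y = (\<Sum>i\<in>UNIV. \<Sum>j\<in>UNIV. X$i$j * Y$i$j)"
  by (simp add: inner_vec_def)

lemma norm_sq_mat: "(norm (X::real^'n^'n))\<^sup>2 = (\<Sum>i\<in>UNIV. \<Sum>j\<in>UNIV. (X$i$j)\<^sup>2)"
proof -
  have "(norm X)\<^sup>2 = X \<bullet> X" by (rule power2_norm_eq_inner)
  then show ?thesis by (simp add: inner_mat power2_eq_square)
qed

lemma entry_le_norm: "\<bar>(X::real^'n^'n)$i$j\<bar> \<le> norm X"
proof -
  have "\<bar>(X$i)$j\<bar> \<le> norm (X$i)" by (rule component_le_norm_cart)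
  moreover have "norm (X$i) \<le> norm X" by (rule Finite_Cartesian_Product.norm_nth_le)
  ultimately show ?thesis by linarith
qed

lemma ds_le1: "doubly_stochastic X \<Longrightarrow> X$i$j \<le> 1"
proof -
  assume d: "doubly_stochastic X"
  then have "X$i$j \<le> (\<Sum>j\<in>UNIV. X$i$j)"
    by (intro member_le_sum) (auto simp: doubly_stochastic_def)
  with d show ?thesis by (simp add: doubly_stochastic_def)
qed

lemma two_le_sum:
  fixes g :: "'a::finite \<Rightarrow> real"
  assumes "\<And>x. 0 \<le> g x" "a \<noteq> b"
  shows "g a + g b \<le> sum g UNIV"
proof -
  have "sum g {a, b} \<le> sum g UNIV" using assms by (intro sum_mono2) auto
  then show ?thesis using assms by simp
qed

lemma perm01:
  fixes X :: "real^'n^'n"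
  assumes d: "doubly_stochastic X" and z: "\<And>i j. X$i$j = 0 \<or> X$i$j = 1"
  shows "permutation_matrix X"
proof -
  have ex: "\<exists>j. X$i$j = 1" for i
  proof (rule ccontr)
    assume "\<not> ?thesis"
    then have "\<forall>j. X$i$j = 0" using z by metis
    then have "(\<Sum>j\<in>UNIV. X$i$j) = 0" by simp
    then show False using d by (simp add: doubly_stochastic_def)
  qed
  have un: "j = j'" if "X$i$j = 1" "X$i$j' = 1" for i j j'
  proof (rule ccontr)
    assume "j \<noteq> j'"
    then have "X$i$j + X$i$j' \<le> (\<Sum>j\<in>UNIV. X$i$j)"
      using d by (intro two_le_sum) (auto simp: doubly_stochastic_def)
    then show False using d that by (simp add: doubly_stochastic_def)
  qed
  define \<pi> where "\<pi> i = (THE j. X$i$j = 1)" for i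
  have pi: "X$i$(\<pi> i) = 1" for i
    unfolding \<pi>_def by (rule theI') (use ex un in blast)
  have entries: "X$i$j = (if j = \<pi> i then 1 else 0)" for i j
  proof (cases "j = \<pi> i")
    case True then show ?thesis using pi by simp
  next
    case False
    then have "X$i$j \<noteq> 1" using un[of i "\<pi> i" j] pi by auto
    then show ?thesis using z[of i j] False by auto
  qed
  have "inj \<pi>"
  proof (rule injI)
    fix i i' assume "\<pi> i = \<pi> i'"
    show "i = i'"
    proof (rule ccontr)
      assume "i \<noteq> i'"
      then have "X$i$(\<pi> i) + X$i'$(\<pi> i) \<le> (\<Sum>k\<in>UNIV. X$k$(\<pi> i))"
        using d two_le_sum[of "\<lambda>k. X$k$(\<pi> i)" i i'] by (auto simp: doubly_stochastic_def)
      moreover have "X$i'$(\<pi> i) = 1" using pi[of i'] \<open>\<pi> i = \<pi> i'\<close> by simp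
      ultimately show False using d pi[of i] by (simp add: doubly_stochastic_def)
    qed
  qed
  then have "surj \<pi>" using finite_UNIV_inj_surj[of \<pi>] by simp
  then have "bij_betw \<pi> UNIV UNIV" using \<open>inj \<pi>\<close> by (simp add: bij_betw_def)
  then have "\<pi> permutes UNIV" by (rule bij_imp_permutes) simp
  then show ?thesis unfolding permutation_matrix_def
  proof (intro exI[of _ \<pi>] conjI allI)
    fix i j show "X$i$j = (if j = \<pi> i then 1 else 0)" by (rule entries)
  qed
qed

lemma Ints_strict: "(x::real) \<in> \<int> \<Longrightarrow> 0 < x \<Longrightarrow> x < 1 \<Longrightarrow> False"
  by (elim Ints_cases) simp

lemma row_two:
  fixes g :: "'a::finite \<Rightarrow> real"
  assumes "\<And>j. 0 \<le> g j \<and> g j \<le> 1" "sum g UNIV = 1" "0 < g j0" "g j0 < 1"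
  shows "2 \<le> card {j. 0 < g j \<and> g j < 1}"
proof (rule ccontr)
  assume "\<not> ?thesis"
  moreover have "j0 \<in> {j. 0 < g j \<and> g j < 1}" using assms by auto
  ultimately have S: "{j. 0 < g j \<and> g j < 1} = {j0}"
    using card_le_Suc0_iff_eq[of "{j. 0 < g j \<and> g j < 1}"] by fastforce
  have ints: "g j \<in> \<int>" if "j \<noteq> j0" for j
  proof -
    have "\<not> (0 < g j \<and> g j < 1)" using S that by blast
    then have "g j = 0 \<or> g j = 1" using assms(1)[of j] by auto
    then show ?thesis by auto
  qed
  have "sum g UNIV = g j0 + sum g (UNIV - {j0})"
    by (simp add: sum.remove)
  then have "g j0 = 1 - sum g (UNIV - {j0})" using assms by simp
  also have "\<dots> \<in> \<int>" using ints by (intro Ints_diff Ints_sum) auto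
  finally show False by (rule Ints_strict[OF _ assms(3) assms(4)])
qed

lemma card_pairs:
  fixes F :: "('a::finite \<times> 'b::finite) set"
  assumes "\<And>i. i \<in> fst ` F \<Longrightarrow> 2 \<le> card {j. (i,j) \<in> F}"
  shows "2 * card (fst ` F) \<le> card F"
proof -
  have F: "F = (SIGMA i:fst ` F. {j. (i,j) \<in> F})" by force
  have "card F = (\<Sum>i\<in>fst ` F. card {j. (i,j) \<in> F})"
    by (subst F) (simp)
  moreover have "(\<Sum>i\<in>fst ` F. 2) \<le> (\<Sum>i\<in>fst ` F. card {j. (i,j) \<in> F})"
    using assms by (intro sum_mono) auto
  ultimately show ?thesis by simp
qed



lemma extreme:
  fixes X :: "real^'n^'n"
  assumes d: "doubly_stochastic X" and fr: "0 < X$i0$j0" "X$i0$j0 < 1"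
  shows "\<exists>D::real^'n^'n. D \<noteq> 0 \<and> (\<forall>i. (\<Sum>j\<in>UNIV. D$i$j) = 0) \<and> (\<forall>j. (\<Sum>i\<in>UNIV. D$i$j) = 0)
            \<and> (\<forall>i j. D$i$j \<noteq> 0 \<longrightarrow> 0 < X$i$j \<and> X$i$j < 1)"
proof -
  define Fr where "Fr = {(i,j). 0 < X$i$j \<and> X$i$j < 1}"
  define R where "R = fst ` Fr"
  define C where "C = snd ` Fr"
  have fin: "finite Fr" by simp
  have ent: "0 \<le> X$i$j \<and> X$i$j \<le> 1" for i j
    using d ds_le1[OF d] by (auto simp: doubly_stochastic_def)
  have rowc: "2 \<le> card {j. (i,j) \<in> Fr}" if "i \<in> fst ` Fr" for i
  proof -
    from that obtain j where j: "(i,j) \<in> Fr" by auto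
    have "2 \<le> card {j. 0 < X$i$j \<and> X$i$j < 1}"
      using d ent j by (intro row_two[of "\<lambda>j. X$i$j" j]) (auto simp: doubly_stochastic_def Fr_def)
    then show ?thesis by (simp add: Fr_def)
  qed
  have colc: "2 \<le> card {i. (j,i) \<in> prod.swap ` Fr}" if "j \<in> fst ` (prod.swap ` Fr)" for j
  proof -
    from that obtain i where i: "(i,j) \<in> Fr" by auto
    have "2 \<le> card {i. 0 < X$i$j \<and> X$i$j < 1}"
      using d ent i by (intro row_two[of "\<lambda>i. X$i$j" i]) (auto simp: doubly_stochastic_def Fr_def)
    moreover have "{i. (j,i) \<in> prod.swap ` Fr} = {i. 0 < X$i$j \<and> X$i$j < 1}"
      by (auto simp: Fr_def image_iff)
    ultimately show ?thesis by simp
  qed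
  have c1: "2 * card R \<le> card Fr" unfolding R_def by (rule card_pairs) (rule rowc)
  have "2 * card (fst ` prod.swap ` Fr) \<le> card (prod.swap ` Fr)" by (rule card_pairs) (rule colc)
  moreover have "fst ` prod.swap ` Fr = C" unfolding C_def by (force simp: image_iff)
  moreover have "card (prod.swap ` Fr) = card Fr" by (rule card_image) simp
  ultimately have c2: "2 * card C \<le> card Fr" by simp
  have ij0: "(i0,j0) \<in> Fr" using fr by (simp add: Fr_def)
  then have Rne: "card R \<ge> 1" and Cne: "card C \<ge> 1" unfolding R_def C_def
    by (auto simp: Suc_le_eq card_gt_0_iff)
  have c0ex: "j0 \<in> C" using ij0 unfolding C_def by force
  define c0 where "c0 = j0"
  define v where "v = (\<lambda>x::'n\<times>'n. (axis (fst x) (1::real), axis (snd x) (1::real)))"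
  have injv: "inj_on v Fr"
    by (auto simp: inj_on_def v_def axis_eq_axis prod_eq_iff)
  define S where "S = (\<lambda>i. (axis i (1::real), axis c0 (1::real))) ` R \<union> (\<lambda>j. (0, axis j 1 - axis c0 1)) ` (C - {c0})"
  have finS: "finite S" by (simp add: S_def)
  have cardS: "card S \<le> card R + (card C - 1)"
  proof -
    have "card S \<le> card ((\<lambda>i. (axis i (1::real), axis c0 (1::real))) ` R) + card ((\<lambda>j. (0::real^'n, axis j 1 - axis c0 (1::real))) ` (C - {c0}))"
      unfolding S_def by (rule card_Un_le)
    also have "\<dots> \<le> card R + card (C - {c0})"
      by (intro add_mono card_image_le) auto
    also have "card (C - {c0}) = card C - 1" using c0ex c0_def by simp
    finally show ?thesis .
  qed
  have sp: "v ` Fr \<subseteq> span S"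
  proof
    fix w assume "w \<in> v ` Fr"
    then obtain i j where ij: "(i,j) \<in> Fr" "w = v (i,j)" by auto
    have iR: "i \<in> R" using ij unfolding R_def by force
    have jC: "j \<in> C" using ij unfolding C_def by force
    have s1: "(axis i (1::real), axis c0 (1::real)) \<in> span S"
      using iR by (intro span_base) (auto simp: S_def)
    show "w \<in> span S"
    proof (cases "j = c0")
      case True then show ?thesis using s1 ij by (simp add: v_def)
    next
      case False
      then have "(0::real^'n, axis j 1 - axis c0 (1::real)) \<in> span S"
        using jC by (intro span_base) (auto simp: S_def)
      then have "(axis i (1::real), axis c0 (1::real)) + (0, axis j 1 - axis c0 1) \<in> span S"
        using s1 by (intro span_add)
      then show ?thesis using ij by (simp add: v_def)
    qed
  qed
  have dep: "dependent (v ` Fr)"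
  proof (rule ccontr)
    assume "\<not> dependent (v ` Fr)"
    then have "card (v ` Fr) \<le> card S"
      using real_vector.independent_span_bound[OF finS _ sp] by blast
    moreover have "card (v ` Fr) = card Fr" using injv by (rule card_image)
    ultimately show False using c1 c2 cardS Rne Cne by linarith
  qed
  obtain u where u1: "\<exists>w\<in>v ` Fr. u w \<noteq> 0" and u2: "(\<Sum>w\<in>v ` Fr. u w *\<^sub>R w) = 0"
    using dep real_vector.dependent_finite[of "v ` Fr"] by auto
  define a where "a = (\<lambda>x. u (v x))"
  have asum: "(\<Sum>x\<in>Fr. a x *\<^sub>R v x) = 0"
    using u2 by (simp add: sum.reindex[OF injv] a_def)
  define D where "D = (\<chi> i j. if (i,j) \<in> Fr then a (i,j) else 0)"
  have Dij: "D$i$j = (if (i,j) \<in> Fr then a (i,j) else 0)" for i j by (simp add: D_def)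
  have rows: "(\<Sum>j\<in>UNIV. D$i$j) = 0" for i
  proof -
    have "fst (\<Sum>x\<in>Fr. a x *\<^sub>R v x) $ i = 0" using asum by simp
    then have "(\<Sum>x\<in>Fr. if i = fst x then a x else 0) = 0"
      by (simp add: fst_sum sum_component v_def axis_def if_distrib cong: if_cong)
    then have "(\<Sum>x\<in>{x\<in>Fr. i = fst x}. a x) = 0" by (simp add: sum.inter_filter)
    moreover have "{x\<in>Fr. i = fst x} = Pair i ` {j. (i,j) \<in> Fr}" by force
    ultimately have "(\<Sum>j\<in>{j. (i,j) \<in> Fr}. a (i,j)) = 0"
      by (simp add: sum.reindex inj_on_def)
    then show ?thesis by (simp add: Dij sum.inter_filter[symmetric])
  qed
  have cols: "(\<Sum>i\<in>UNIV. D$i$j) = 0" for j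
  proof -
    have "snd (\<Sum>x\<in>Fr. a x *\<^sub>R v x) $ j = 0" using asum by simp
    then have "(\<Sum>x\<in>Fr. if j = snd x then a x else 0) = 0"
      by (simp add: snd_sum sum_component v_def axis_def if_distrib cong: if_cong)
    then have "(\<Sum>x\<in>{x\<in>Fr. j = snd x}. a x) = 0" by (simp add: sum.inter_filter)
    moreover have "{x\<in>Fr. j = snd x} = (\<lambda>i. (i,j)) ` {i. (i,j) \<in> Fr}" by force
    ultimately have "(\<Sum>i\<in>{i. (i,j) \<in> Fr}. a (i,j)) = 0"
      by (simp add: sum.reindex inj_on_def)
    then show ?thesis by (simp add: Dij sum.inter_filter[symmetric])
  qed
  from u1 obtain x where x: "x \<in> Fr" "a x \<noteq> 0" by (auto simp: a_def)
  then have "D$(fst x)$(snd x) \<noteq> 0" by (simp add: Dij)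
  then have "D \<noteq> 0" by auto
  moreover have "\<forall>i j. D$i$j \<noteq> 0 \<longrightarrow> 0 < X$i$j \<and> X$i$j < 1"
    by (auto simp: Dij Fr_def split: if_splits)
  ultimately show ?thesis using rows cols by blast
qed



lemma part_b:
  fixes f :: "real^'n^'n \<Rightarrow> real"
    and G :: "real^'n^'n \<Rightarrow> real^'n^'n"
  assumes curv: "\<And>X Y. doubly_stochastic X \<Longrightarrow> doubly_stochastic Y \<Longrightarrow>
         f Y - f X - G X \<bullet> (Y - X) \<le> nu_hi / 2 * (norm (Y - X))\<^sup>2"
    and p: "0 < p" "p < 1" and e: "0 \<le> e"
    and sig: "\<sigma> > max (nu_hi / (p * (1 - p) * (1 + e) powr (p - 2))) 0"
    and lm: "local_minimizer_on (F_obj f \<sigma> p e) {X. doubly_stochastic X} X"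
  shows "permutation_matrix X"
proof -
  define nu where "nu = p * (1 - p) * (1 + e) powr (p - 2)"
  have nupos: "0 < nu" unfolding nu_def using p e by auto
  have sigpos: "0 < \<sigma>" using sig by auto
  have signu: "nu_hi < \<sigma> * nu" using sig nupos unfolding nu_def[symmetric]
    by (simp add: pos_divide_less_eq)
  have d: "doubly_stochastic X" using lm by (simp add: local_minimizer_on_def)
  obtain \<delta> where \<delta>: "\<delta> > 0" "\<And>Y. doubly_stochastic Y \<Longrightarrow> dist Y X < \<delta> \<Longrightarrow>
      F_obj f \<sigma> p e X \<le> F_obj f \<sigma> p e Y"
    using lm by (auto simp: local_minimizer_on_def)
  have ent: "0 \<le> X$i$j \<and> X$i$j \<le> 1" for i j
    using d ds_le1[OF d] by (auto simp: doubly_stochastic_def)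
  show ?thesis
  proof (cases "\<forall>i j. X$i$j = 0 \<or> X$i$j = 1")
    case True then show ?thesis using perm01[OF d] by blast
  next
    case False
    then obtain i0 j0 where "0 < X$i0$j0" "X$i0$j0 < 1" using ent
      by (metis less_eq_real_def)
    then obtain D :: "real^'n^'n" where D: "D \<noteq> 0" "\<And>i. (\<Sum>j\<in>UNIV. D$i$j) = 0"
       "\<And>j. (\<Sum>i\<in>UNIV. D$i$j) = 0" "\<And>i j. D$i$j \<noteq> 0 \<Longrightarrow> 0 < X$i$j \<and> X$i$j < 1"
      using extreme[OF d] by blast
    define Sup where "Sup = {(i,j). D$i$j \<noteq> 0}"
    have Supne: "Sup \<noteq> {}" using D(1) unfolding Sup_def by (auto simp: vec_eq_iff)
    define \<mu> where "\<mu> = Min ((\<lambda>x. min (X$fst x$snd x) (1 - X$fst x$snd x)) ` Sup)"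
    have \<mu>pos: "0 < \<mu>" unfolding \<mu>_def using Supne D(4)
      by (subst Min_gr_iff) (auto simp: Sup_def)
    have \<mu>le: "\<mu> \<le> X$i$j" "\<mu> \<le> 1 - X$i$j" if "D$i$j \<noteq> 0" for i j
    proof -
      have "\<mu> \<le> min (X$i$j) (1 - X$i$j)" unfolding \<mu>_def
        by (rule Min_le) (use that in \<open>auto simp: Sup_def image_iff\<close>)
      then show "\<mu> \<le> X$i$j" "\<mu> \<le> 1 - X$i$j" by auto
    qed
    define N where "N = norm D"
    have nD: "0 < N" using D(1) unfolding N_def by simp
    define s where "s = min (\<mu> / (2 * (N + 1))) (\<delta> / (2 * N))"
    have "0 < 2 * (N + 1)" using nD by simp
    then have "0 < \<mu> / (2 * (N + 1))" using \<mu>pos by (intro divide_pos_pos)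
    moreover have "0 < \<delta> / (2 * N)" using \<delta>(1) nD by (intro divide_pos_pos) auto
    ultimately have spos: "0 < s" unfolding s_def by simp
    have snD: "s * N < \<mu>"
    proof -
      have "s * N \<le> \<mu> / (2 * (N + 1)) * N"
        using nD unfolding s_def by (intro mult_right_mono) auto
      also have "\<dots> < \<mu>" using \<mu>pos nD by (simp add: field_simps add_pos_pos)
      finally show ?thesis .
    qed
    have sdel: "s * N < \<delta>"
    proof -
      have "s * N \<le> \<delta> / (2 * N) * N"
        using nD unfolding s_def by (intro mult_right_mono) auto
      also have "\<dots> < \<delta>" using \<delta> nD by (simp add: field_simps)
      finally show ?thesis .
    qed
    have small: "0 < X$i$j - \<bar>s * D$i$j\<bar>" "X$i$j + \<bar>s * D$i$j\<bar> < 1" if "D$i$j \<noteq> 0" for i j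
    proof -
      have "\<bar>s * D$i$j\<bar> \<le> s * N" using spos entry_le_norm[of D i j] unfolding N_def
        by (simp add: abs_mult mult_left_mono)
      then show "0 < X$i$j - \<bar>s * D$i$j\<bar>" "X$i$j + \<bar>s * D$i$j\<bar> < 1"
        using snD \<mu>le[OF that] by auto
    qed
    have dsY: "doubly_stochastic (X + t *\<^sub>R D)" if "\<bar>t\<bar> = s" for t
      unfolding doubly_stochastic_def
    proof (intro conjI allI)
      fix i j
      show "0 \<le> (X + t *\<^sub>R D)$i$j"
      proof (cases "D$i$j = 0")
        case True then show ?thesis using ent by simp
      next
        case False
        have "- (t * D$i$j) \<le> \<bar>t * D$i$j\<bar>" by (rule abs_ge_minus_self)
        then show ?thesis using small[OF False] that by (simp add: abs_mult)
      qed
    next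
      fix i
      have "(\<Sum>j\<in>UNIV. (X + t *\<^sub>R D)$i$j) = (\<Sum>j\<in>UNIV. X$i$j) + t * (\<Sum>j\<in>UNIV. D$i$j)"
        by (simp add: sum.distrib sum_distrib_left)
      then show "(\<Sum>j\<in>UNIV. (X + t *\<^sub>R D)$i$j) = 1" using d D(2) by (simp add: doubly_stochastic_def)
    next
      fix j
      have "(\<Sum>i\<in>UNIV. (X + t *\<^sub>R D)$i$j) = (\<Sum>i\<in>UNIV. X$i$j) + t * (\<Sum>i\<in>UNIV. D$i$j)"
        by (simp add: sum.distrib sum_distrib_left)
      then show "(\<Sum>i\<in>UNIV. (X + t *\<^sub>R D)$i$j) = 1" using d D(3) by (simp add: doubly_stochastic_def)
    qed
    define Yp where "Yp = X + s *\<^sub>R D"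
    define Ym where "Ym = X + (- s) *\<^sub>R D"
    have dp: "doubly_stochastic Yp" "doubly_stochastic Ym"
      unfolding Yp_def Ym_def using dsY[of s] dsY[of "-s"] spos by auto
    have distp: "dist Yp X < \<delta>" "dist Ym X < \<delta>"
      unfolding Yp_def Ym_def dist_norm N_def using sdel spos by (auto simp: N_def)
    have Fp: "F_obj f \<sigma> p e X \<le> F_obj f \<sigma> p e Yp" and Fm: "F_obj f \<sigma> p e X \<le> F_obj f \<sigma> p e Ym"
      using \<delta>(2) dp distp by auto
    have nYp: "norm (Yp - X) = s * N" "norm (Ym - X) = s * N"
      unfolding Yp_def Ym_def N_def using spos by auto
    have fp: "f Yp - f X - G X \<bullet> (s *\<^sub>R D) \<le> nu_hi / 2 * (s * N)\<^sup>2"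
      using curv[OF d dp(1)] nYp unfolding Yp_def by simp
    have fm: "f Ym - f X + G X \<bullet> (s *\<^sub>R D) \<le> nu_hi / 2 * (s * N)\<^sup>2"
      using curv[OF d dp(2)] nYp unfolding Ym_def by simp
    have fsum: "f Yp + f Ym - 2 * f X \<le> nu_hi * (s * N)\<^sup>2" using fp fm by simp
    have ent_h: "(Yp$i$j + e) powr p + (Ym$i$j + e) powr p - 2 * (X$i$j + e) powr p
        \<le> - nu * (s * D$i$j)\<^sup>2" for i j
    proof (cases "D$i$j = 0")
      case True then show ?thesis by (simp add: Yp_def Ym_def)
    next
      case False
      have "(X$i$j + s * D$i$j + e) powr p + (X$i$j - s * D$i$j + e) powr p - 2 * (X$i$j + e) powr p
            \<le> - nu * (s * D$i$j)\<^sup>2"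
        unfolding nu_def using small[OF False] e p by (intro concave_bound) auto
      then show ?thesis by (simp add: Yp_def Ym_def)
    qed
    define h where "h = (\<lambda>Y::real^'n^'n. \<Sum>i\<in>UNIV. \<Sum>j\<in>UNIV. (Y $ i $ j + e) powr p)"
    have "h Yp + h Ym - 2 * h X = (\<Sum>i\<in>UNIV. \<Sum>j\<in>UNIV.
        (Yp$i$j + e) powr p + (Ym$i$j + e) powr p - 2 * (X$i$j + e) powr p)"
      unfolding h_def by (simp add: sum.distrib sum_subtractf sum_distrib_left)
    also have "\<dots> \<le> (\<Sum>i\<in>UNIV. \<Sum>j\<in>UNIV. - nu * (s * D$i$j)\<^sup>2)"
      by (intro sum_mono ent_h)
    also have "\<dots> = - nu * s\<^sup>2 * N\<^sup>2"
      unfolding N_def by (simp add: norm_sq_mat sum_distrib_left power_mult_distrib algebra_simps)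
    finally have hsum: "h Yp + h Ym - 2 * h X \<le> - nu * s\<^sup>2 * N\<^sup>2" .
    have Fdef: "F_obj f \<sigma> p e Y = f Y + \<sigma> * h Y" for Y unfolding F_obj_def h_def by simp
    have "\<sigma> * (h Yp + h Ym - 2 * h X) \<le> \<sigma> * (- nu * s\<^sup>2 * N\<^sup>2)"
      using hsum sigpos by (intro mult_left_mono) auto
    moreover have "0 < (\<sigma> * nu - nu_hi) * (s\<^sup>2 * N\<^sup>2)"
      using signu spos nD by (intro mult_pos_pos) auto
    ultimately have "F_obj f \<sigma> p e Yp + F_obj f \<sigma> p e Ym - 2 * F_obj f \<sigma> p e X < 0"
      using fsum unfolding Fdef by (simp add: algebra_simps power_mult_distrib)
    then show ?thesis using Fp Fm by simp
  qed
qed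



lemma perm_ds:
  fixes P :: "real^'n^'n"
  assumes pi: "\<pi> permutes UNIV" and P: "\<And>i j. P$i$j = (if j = \<pi> i then 1 else 0)"
  shows "doubly_stochastic P"
  unfolding doubly_stochastic_def
proof (intro conjI allI)
  fix i j show "0 \<le> P$i$j" using P by simp
next
  fix i show "(\<Sum>j\<in>UNIV. P$i$j) = 1" using P by simp
next
  fix j
  have "(\<Sum>i\<in>UNIV. P$i$j) = (\<Sum>i\<in>UNIV. if i = inv \<pi> j then 1 else 0)"
  proof (rule sum.cong)
    fix i show "P$i$j = (if i = inv \<pi> j then 1 else 0)"
      using P[of i j] permutes_inv_eq[OF pi, of j i] by auto
  qed simp
  then show "(\<Sum>i\<in>UNIV. P$i$j) = 1" by simp
qed

lemma aux_nonneg: "(0::real) \<le> L * x \<Longrightarrow> 0 < x \<Longrightarrow> 0 \<le> L"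
  by (simp add: zero_le_mult_iff)

lemma aux_pos: "(0::real) < s * q \<Longrightarrow> 0 < q \<Longrightarrow> 0 < s"
  by (simp add: zero_less_mult_iff)

lemma lin_aux: "X - (X - A) / 4 \<le> Y \<Longrightarrow> W \<le> (X - A) / 2 \<Longrightarrow> 0 < X - A \<Longrightarrow> 0 \<le> Y - A - (W::real)"
  by (simp add: field_simps)

lemma part_a:
  fixes f :: "real^'n^'n \<Rightarrow> real"
    and G :: "real^'n^'n \<Rightarrow> real^'n^'n"
  assumes lip: "\<And>X Y. unit_box_matrix X \<Longrightarrow> unit_box_matrix Y \<Longrightarrow> norm (G X - G Y) \<le> L * norm (X - Y)"
    and curv: "\<And>X Y. doubly_stochastic X \<Longrightarrow> doubly_stochastic Y \<Longrightarrow>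
         nu_lo / 2 * (norm (Y - X))\<^sup>2 \<le> f Y - f X - G X \<bullet> (Y - X)"
    and p: "0 < p" "p < 1" and e: "0 < e" and c: "1 < c"
    and sig: "\<sigma> > c / p * (L * (2 + sqrt (real CARD('n))) + norm (G 0))
              / (e powr (p - 1) - (1/2 + e) powr (p - 1))"
    and P: "permutation_matrix P"
  shows "local_minimizer_on (F_obj f \<sigma> p e) {X. doubly_stochastic X} P"
proof -
  obtain \<pi> where pi: "\<pi> permutes UNIV" and Pij: "\<And>i j. P$i$j = (if j = \<pi> i then 1 else 0)"
    using P unfolding permutation_matrix_def by blast
  have dP: "doubly_stochastic P" by (rule perm_ds[OF pi Pij])
  have ubP: "unit_box_matrix P" unfolding unit_box_matrix_def using Pij by simp
  have ub0: "unit_box_matrix (0::real^'n^'n)" unfolding unit_box_matrix_def by simp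
  have sq: "(P$i$j)\<^sup>2 = (if j = \<pi> i then 1 else 0)" for i j using Pij by simp
  have nP2: "(norm P)\<^sup>2 = real CARD('n)"
    unfolding norm_sq_mat sq by simp
  have "norm P = sqrt ((norm P)\<^sup>2)" by simp
  then have nP: "norm P = sqrt (real CARD('n))" by (simp only: nP2)
  have nPpos: "0 < norm P" using nP by simp
  have L1: "norm (G 0 - G P) \<le> L * norm (0 - P)" by (rule lip[OF ub0 ubP])
  have "0 \<le> L * norm (0 - P)" by (rule order_trans[OF norm_ge_zero L1])
  moreover have "0 < norm (0 - P)" using nPpos by simp
  ultimately have Lnn: "0 \<le> L" by (rule aux_nonneg)
  define A where "A = norm (G 0) + L * sqrt (real CARD('n))"
  have nGP: "norm (G P) \<le> A"
  proof -
    have "norm (G P) \<le> norm (G 0) + norm (G P - G 0)" by (rule norm_triangle_sub)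
    also have "norm (G P - G 0) = norm (G 0 - G P)" by (rule norm_minus_commute)
    also have "\<dots> \<le> L * norm P" using L1 by simp
    finally show ?thesis using nP unfolding A_def by simp
  qed
  define K0 where "K0 = e powr (p - 1) - (1/2 + e) powr (p - 1)"
  have K0pos: "0 < K0" unfolding K0_def using p e by (simp add: powr_less_mono2_neg)
  define B where "B = L * (2 + sqrt (real CARD('n))) + norm (G 0)"
  have "L * sqrt (real CARD('n)) \<le> L * (2 + sqrt (real CARD('n)))" using Lnn by (intro mult_left_mono) auto
  then have AB: "A \<le> B" "0 \<le> A" unfolding A_def B_def using Lnn by auto
  have "c / p * B / K0 < \<sigma>" using sig unfolding B_def K0_def by simp
  then have "c * B / (p * K0) < \<sigma>" by simp
  moreover have "0 < p * K0" using p K0pos by simp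
  ultimately have "c * B < \<sigma> * (p * K0)" by (simp add: pos_divide_less_eq)
  then have "c * B < \<sigma> * p * K0" by (simp add: mult.assoc)
  moreover have "B \<le> c * B" using c AB by (simp add: mult_le_cancel_right1)
  ultimately have gapA: "A < \<sigma> * p * K0" using AB by linarith
  have "0 < \<sigma> * (p * K0)" using gapA AB by (simp add: mult.assoc)
  moreover have "0 < p * K0" using p K0pos by simp
  ultimately have sigpos: "0 < \<sigma>" by (rule aux_pos)
  define gap where "gap = \<sigma> * p * K0 - A"
  have gap: "0 < gap" using gapA unfolding gap_def by simp
  have spp: "0 < \<sigma> * p" using sigpos p by simp
  have "isCont (\<lambda>d. (d + e) powr (p - 1)) 0" using e by (intro continuous_intros) auto
  have "0 < gap / (4 * (\<sigma> * p))" using gap spp by simp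
  then obtain \<delta>1 where \<delta>1: "\<delta>1 > 0" "\<And>d. dist d 0 < \<delta>1 \<Longrightarrow>
      dist ((d + e) powr (p - 1)) ((0 + e) powr (p - 1)) < gap / (4 * (\<sigma> * p))"
    using \<open>isCont _ 0\<close> \<open>0 < gap / (4 * (\<sigma> * p))\<close> unfolding continuous_at_eps_delta by blast
  define \<delta>0 where "\<delta>0 = min \<delta>1 (min (1/2) (gap / (\<bar>nu_lo\<bar> + 1)))"
  have \<delta>0pos: "0 < \<delta>0" unfolding \<delta>0_def using \<delta>1 gap by auto
  show ?thesis unfolding local_minimizer_on_def
  proof (intro conjI exI[of _ \<delta>0] ballI impI)
    show "P \<in> {X. doubly_stochastic X}" using dP by simp
    show "0 < \<delta>0" by (rule \<delta>0pos)
    fix Y assume "Y \<in> {X. doubly_stochastic X}" and dY: "dist Y P < \<delta>0"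
    then have d: "doubly_stochastic Y" by simp
    define Z where "Z = Y - P"
    define N where "N = norm Z"
    have N: "0 \<le> N" "N < \<delta>1" "N < 1/2" "N \<le> gap / (\<bar>nu_lo\<bar> + 1)"
      using dY unfolding N_def Z_def dist_norm \<delta>0_def by auto
    have Zij: "\<bar>Y$i$j - P$i$j\<bar> \<le> N" for i j
      using entry_le_norm[of Z i j] unfolding N_def Z_def by simp
    have ent: "0 \<le> Y$i$j \<and> Y$i$j \<le> 1" for i j
      using d ds_le1[OF d] by (auto simp: doubly_stochastic_def)
    define r where "r i = 1 - Y$i$(\<pi> i)" for i
    define m where "m = (\<Sum>i\<in>UNIV. r i)"
    have rnn: "0 \<le> r i" for i unfolding r_def using ent by simp
    have mnn: "0 \<le> m" unfolding m_def using rnn by (simp add: sum_nonneg)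
    have pinv: "\<pi> (inv \<pi> j) = j" "inv \<pi> (\<pi> i) = i" for i j using permutes_inverses[OF pi] by auto
    have Zb: "(Z$i$j)\<^sup>2 \<le> r i * r (inv \<pi> j)" for i j
    proof (cases "j = \<pi> i")
      case True
      then show ?thesis using pinv Pij unfolding Z_def r_def by (simp add: power2_eq_square algebra_simps)
    next
      case False
      have "Y$i$j + Y$i$(\<pi> i) \<le> (\<Sum>j\<in>UNIV. Y$i$j)"
        using ent False by (intro two_le_sum) auto
      then have b1: "Y$i$j \<le> r i" using d unfolding r_def by (simp add: doubly_stochastic_def)
      have ne: "i \<noteq> inv \<pi> j" using False pinv(1)[of j] by auto
      have "Y$i$j + Y$(inv \<pi> j)$j \<le> (\<Sum>i\<in>UNIV. Y$i$j)"
        using ent ne by (intro two_le_sum[of "\<lambda>i. Y$i$j"]) auto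
      then have b2: "Y$i$j \<le> r (inv \<pi> j)" using d pinv unfolding r_def by (simp add: doubly_stochastic_def)
      have "(Y$i$j)\<^sup>2 \<le> r i * r (inv \<pi> j)"
        unfolding power2_eq_square using b1 b2 ent rnn by (intro mult_mono) auto
      then show ?thesis using False Pij unfolding Z_def by simp
    qed
    have "N\<^sup>2 \<le> (\<Sum>i\<in>UNIV. \<Sum>j\<in>UNIV. r i * r (inv \<pi> j))"
      unfolding N_def norm_sq_mat by (intro sum_mono Zb)
    also have "\<dots> = (\<Sum>i\<in>UNIV. r i * m)"
    proof -
      have "(\<Sum>j\<in>UNIV. r (inv \<pi> j)) = m"
        unfolding m_def using sum.permute[OF permutes_inv[OF pi], of r] by (simp add: comp_def)
      then show ?thesis by (simp add: sum_distrib_left[symmetric])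
    qed
    also have "\<dots> = m\<^sup>2" unfolding m_def by (simp add: sum_distrib_right[symmetric] power2_eq_square)
    finally have Nm: "N \<le> m" using mnn N by (simp add: power2_le_iff_abs_le)
    define KN where "KN = (N + e) powr (p - 1) - (1/2 + e) powr (p - 1)"
    define h where "h = (\<lambda>Y::real^'n^'n. \<Sum>i\<in>UNIV. \<Sum>j\<in>UNIV. (Y $ i $ j + e) powr p)"
    define a where "a = p * (N + e) powr (p - 1)"
    define b where "b = p * (1/2 + e) powr (p - 1)"
    have entry: "a * Y$i$j - (if j = \<pi> i then a * Y$i$j + b * (1 - Y$i$j) else 0)
        \<le> (Y$i$j + e) powr p - (P$i$j + e) powr p" for i j
    proof (cases "j = \<pi> i")
      case True
      have "1 - Y$i$j \<le> N" using Zij[of i j] True Pij by simp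
      then have "- (p * (1 - Y$i$j) * (1/2 + e) powr (p - 1)) \<le> (Y$i$j + e) powr p - (1 + e) powr p"
        using N ent e p by (intro on_bound) auto
      then show ?thesis using True Pij unfolding b_def by (simp add: algebra_simps)
    next
      case False
      have "Y$i$j \<le> N" using Zij[of i j] False Pij by simp
      then have "p * Y$i$j * (N + e) powr (p - 1) \<le> (Y$i$j + e) powr p - e powr p"
        using ent e p by (intro off_bound) auto
      then show ?thesis using False Pij unfolding a_def by (simp add: algebra_simps)
    qed
    have rowsum: "(\<Sum>j\<in>UNIV. a * Y$i$j - (if j = \<pi> i then a * Y$i$j + b * (1 - Y$i$j) else 0))
        = p * KN * r i" for i
    proof -
      have "(\<Sum>j\<in>UNIV. a * Y$i$j - (if j = \<pi> i then a * Y$i$j + b * (1 - Y$i$j) else 0))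
          = a * (\<Sum>j\<in>UNIV. Y$i$j) - (a * Y$i$(\<pi> i) + b * (1 - Y$i$(\<pi> i)))"
      proof -
        have "(\<Sum>j\<in>UNIV. a * Y$i$j - (if j = \<pi> i then a * Y$i$j + b * (1 - Y$i$j) else 0))
           = (\<Sum>j\<in>UNIV. a * Y$i$j) - (\<Sum>j\<in>UNIV. (if j = \<pi> i then a * Y$i$j + b * (1 - Y$i$j) else 0))"
          by (rule sum_subtractf)
        also have "(\<Sum>j\<in>UNIV. (if j = \<pi> i then a * Y$i$j + b * (1 - Y$i$j) else 0))
           = a * Y$i$(\<pi> i) + b * (1 - Y$i$(\<pi> i))" using sum.delta[of UNIV "\<pi> i" "\<lambda>j. a * Y$i$j + b * (1 - Y$i$j)"] by (simp only: finite UNIV_I if_True)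
        also have "(\<Sum>j\<in>UNIV. a * Y$i$j) = a * (\<Sum>j\<in>UNIV. Y$i$j)" by (rule sum_distrib_left[symmetric])
        finally show ?thesis .
      qed
      also have "\<dots> = a * r i - b * r i" using d unfolding r_def by (simp add: doubly_stochastic_def algebra_simps)
      finally show ?thesis unfolding a_def b_def KN_def by (simp add: algebra_simps)
    qed
    have "p * KN * m = (\<Sum>i\<in>UNIV. \<Sum>j\<in>UNIV. a * Y$i$j - (if j = \<pi> i then a * Y$i$j + b * (1 - Y$i$j) else 0))"
      unfolding m_def rowsum by (simp add: sum_distrib_left)
    also have "\<dots> \<le> (\<Sum>i\<in>UNIV. \<Sum>j\<in>UNIV. (Y$i$j + e) powr p - (P$i$j + e) powr p)"
      by (intro sum_mono entry)
    also have "\<dots> = h Y - h P" unfolding h_def by (simp add: sum_subtractf)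
    finally have hgain: "p * KN * m \<le> h Y - h P" .
    have "nu_lo / 2 * N\<^sup>2 \<le> f Y - f P - G P \<bullet> Z" using curv[OF dP d] unfolding N_def Z_def by simp
    moreover have "- (A * m) \<le> G P \<bullet> Z"
    proof -
      have "\<bar>G P \<bullet> Z\<bar> \<le> norm (G P) * N" unfolding N_def by (rule Cauchy_Schwarz_ineq2)
      also have "\<dots> \<le> A * m" using nGP Nm N(1) AB by (intro mult_mono) auto
      finally show ?thesis by linarith
    qed
    moreover have "- (\<bar>nu_lo\<bar> / 2 * N * m) \<le> nu_lo / 2 * N\<^sup>2"
    proof -
      have "\<bar>nu_lo\<bar> / 2 * N * N \<le> \<bar>nu_lo\<bar> / 2 * N * m" using Nm N(1) by (intro mult_left_mono) auto
      moreover have "- \<bar>nu_lo\<bar> * (N * N) \<le> nu_lo * (N * N)" by (intro mult_right_mono) auto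
      then have "- (\<bar>nu_lo\<bar> / 2 * N * N) \<le> nu_lo / 2 * N\<^sup>2" by (simp add: power2_eq_square)
      ultimately show ?thesis by linarith
    qed
    ultimately have floss: "- (A * m) - \<bar>nu_lo\<bar> / 2 * N * m \<le> f Y - f P" by linarith
    have KNb: "\<sigma> * p * K0 - gap / 4 \<le> \<sigma> * p * KN"
    proof -
      have "dist ((N + e) powr (p - 1)) ((0 + e) powr (p - 1)) < gap / (4 * (\<sigma> * p))"
        using \<delta>1(2)[of N] N by simp
      then have "e powr (p - 1) - (N + e) powr (p - 1) \<le> gap / (4 * (\<sigma> * p))"
        by (simp add: dist_real_def)
      then have "\<sigma> * p * (e powr (p - 1) - (N + e) powr (p - 1)) \<le> \<sigma> * p * (gap / (4 * (\<sigma> * p)))"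
        using spp by (intro mult_left_mono) auto
      also have "\<sigma> * p * (gap / (4 * (\<sigma> * p))) = gap / 4" using spp sigpos p by simp
      finally have "\<sigma> * p * (e powr (p - 1) - (N + e) powr (p - 1)) \<le> gap / 4" .
      then show ?thesis unfolding K0_def KN_def by (simp add: algebra_simps)
    qed
    have nub: "\<bar>nu_lo\<bar> / 2 * N \<le> gap / 2"
    proof -
      have "\<bar>nu_lo\<bar> * N \<le> (\<bar>nu_lo\<bar> + 1) * N" using N(1) by (simp add: mult_right_mono)
      also have "\<dots> \<le> gap" using N(4) by (simp add: field_simps)
      finally show ?thesis by simp
    qed
    have "0 \<le> \<sigma> * p * KN - A - \<bar>nu_lo\<bar> / 2 * N"
      using KNb nub gap unfolding gap_def by (rule lin_aux)
    then have "0 \<le> (\<sigma> * p * KN - A - \<bar>nu_lo\<bar> / 2 * N) * m"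
      using mnn by (rule mult_nonneg_nonneg)
    moreover have "\<sigma> * (p * KN * m) \<le> \<sigma> * (h Y - h P)" using hgain sigpos by (intro mult_left_mono) auto
    moreover have Fdef: "F_obj f \<sigma> p e X = f X + \<sigma> * h X" for X unfolding F_obj_def h_def by simp
    ultimately show "F_obj f \<sigma> p e P \<le> F_obj f \<sigma> p e Y"
      using floss unfolding Fdef by (simp add: algebra_simps)
  qed
qed


theorem theorem3p5:
  fixes f :: "real^'n^'n \<Rightarrow> real"
    and G :: "real^'n^'n \<Rightarrow> real^'n^'n"
    and L nu_lo nu_hi p :: real
  assumes grad: "\<And>X. (f has_derivative (\<lambda>H. G X \<bullet> H)) (at X)"
    and lip: "\<And>X Y. unit_box_matrix X \<Longrightarrow> unit_box_matrix Y \<Longrightarrow> norm (G X - G Y) \<le> L * norm (X - Y)"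
    and nu_le: "nu_lo \<le> nu_hi"
    and curv: "\<And>X Y. doubly_stochastic X \<Longrightarrow> doubly_stochastic Y \<Longrightarrow>
         nu_lo / 2 * (norm (Y - X))\<^sup>2 \<le> f Y - f X - G X \<bullet> (Y - X)
       \<and> f Y - f X - G X \<bullet> (Y - X) \<le> nu_hi / 2 * (norm (Y - X))\<^sup>2"
    and p: "0 < p" "p < 1"
  shows
   "(\<forall>\<epsilon> c \<sigma>. \<epsilon> > 0 \<longrightarrow> c > 1 \<longrightarrow>
        \<sigma> > c / p * (L * (2 + sqrt (real CARD('n))) + norm (G 0))
              / (\<epsilon> powr (p - 1) - (1/2 + \<epsilon>) powr (p - 1)) \<longrightarrow>
        (\<forall>P. permutation_matrix P \<longrightarrow>
           local_minimizer_on (F_obj f \<sigma> p \<epsilon>) {X. doubly_stochastic X} P))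
  \<and> (\<forall>\<epsilon> \<sigma>. \<epsilon> \<ge> 0 \<longrightarrow>
        \<sigma> > max (nu_hi / (p * (1 - p) * (1 + \<epsilon>) powr (p - 2))) 0 \<longrightarrow>
        (\<forall>X. local_minimizer_on (F_obj f \<sigma> p \<epsilon>) {X. doubly_stochastic X} X \<longrightarrow>
           permutation_matrix X))"
proof (intro conjI allI impI)
  have curv_lo: "\<And>X Y. doubly_stochastic X \<Longrightarrow> doubly_stochastic Y \<Longrightarrow>
         nu_lo / 2 * (norm (Y - X))\<^sup>2 \<le> f Y - f X - G X \<bullet> (Y - X)" using curv by blast
  have curv_hi: "\<And>X Y. doubly_stochastic X \<Longrightarrow> doubly_stochastic Y \<Longrightarrow>
         f Y - f X - G X \<bullet> (Y - X) \<le> nu_hi / 2 * (norm (Y - X))\<^sup>2" using curv by blast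
  {
    fix \<epsilon> c \<sigma> :: real and P :: "real^'n^'n"
    assume "\<epsilon> > 0" "c > 1"
      "\<sigma> > c / p * (L * (2 + sqrt (real CARD('n))) + norm (G 0))
              / (\<epsilon> powr (p - 1) - (1/2 + \<epsilon>) powr (p - 1))"
      "permutation_matrix P"
    then show "local_minimizer_on (F_obj f \<sigma> p \<epsilon>) {X. doubly_stochastic X} P"
      using part_a[OF lip curv_lo p] by blast
  }
  {
    fix \<epsilon> \<sigma> :: real and X :: "real^'n^'n"
    assume "\<epsilon> \<ge> 0" "\<sigma> > max (nu_hi / (p * (1 - p) * (1 + \<epsilon>) powr (p - 2))) 0"
      "local_minimizer_on (F_obj f \<sigma> p \<epsilon>) {X. doubly_stochastic X} X"
    then show "permutation_matrix X"
      using part_b[OF curv_hi p] by blast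
  }
qed

end
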